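(* Let $q$ be an odd positive integer and $m$ a positive integer. If $P_m$ divides $Q_q$, then $m\leq q$ and $m\mid q\cdot 2^{q-1}$.
   Context: $Q_q$ denotes the $q$-dimensional hypercube graph (vertices are $q$-tuples of $0$'s and $1$'s, adjacent iff they differ in exactly one coordinate). $P_m$ denotes the path with $m$ edges. For graphs $H$ and $G$, "$H$ divides $G$" means there is a collection of subgraphs $H_i$ of $G$, each isomorphic to $H$, such that $E(G)$ is the disjoint union of the edge sets $E(H_i)$. *)

theory Defs
  imports Main
begin

definition hypercube_vertices :: "nat \<Rightarrow> bool list set" where
  "hypercube_vertices q = {xs. length xs = q}"

definition hamming :: "bool list \<Rightarrow> bool list \<Rightarrow> nat" where
  "hamming xs ys = card {i. i < length xs \<and> xs ! i \<noteq> ys ! i}"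

definition hypercube_edges :: "nat \<Rightarrow> bool list set set" where
  "hypercube_edges q = {{u, v} | u v. u \<in> hypercube_vertices q \<and> v \<in> hypercube_vertices q
                                    \<and> hamming u v = 1}"

text \<open>A subgraph of (V,E) isomorphic to the path P_m (m edges): given by an injective
  vertex sequence p 0, ..., p m with consecutive vertices adjacent; its edge set is
  the set of the m edges {p i, p (i+1)}.\<close>

definition path_edges :: "(nat \<Rightarrow> 'a) \<Rightarrow> nat \<Rightarrow> 'a set set" where
  "path_edges p m = {{p i, p (Suc i)} | i. i < m}"

definition is_path_in :: "'a set \<Rightarrow> 'a set set \<Rightarrow> (nat \<Rightarrow> 'a) \<Rightarrow> nat \<Rightarrow> bool" where
  "is_path_in V E p m \<longleftrightarrow> inj_on p {0..m} \<and> (\<forall>i\<le>m. p i \<in> V) \<and> path_edges p m \<subseteq> E"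

definition path_divides_hypercube :: "nat \<Rightarrow> nat \<Rightarrow> bool" where
  "path_divides_hypercube m q \<longleftrightarrow>
     (\<exists>(I :: nat set) (ps :: nat \<Rightarrow> nat \<Rightarrow> bool list).
        (\<forall>j\<in>I. is_path_in (hypercube_vertices q) (hypercube_edges q) (ps j) m)
      \<and> (\<forall>j\<in>I. \<forall>k\<in>I. j \<noteq> k \<longrightarrow> path_edges (ps j) m \<inter> path_edges (ps k) m = {})
      \<and> (\<Union>j\<in>I. path_edges (ps j) m) = hypercube_edges q)"

end

theory Submission imports Defs begin
lemma finV: "finite (hypercube_vertices q)" and cardV: "card (hypercube_vertices q) = 2^q"
proof -
  have "hypercube_vertices q = {xs. set xs \<subseteq> (UNIV::bool set) \<and> length xs = q}"
    by (auto simp: hypercube_vertices_def)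
  then show "card (hypercube_vertices q) = 2^q" using card_lists_length_eq[of "UNIV::bool set" q] by simp
  show "finite (hypercube_vertices q)" unfolding hypercube_vertices_def
    using finite_lists_length_eq[of "UNIV::bool set" q] by simp
qed

lemma ham1_iff:
  assumes "length v = q" "length u = q"
  shows "hamming v u = 1 \<longleftrightarrow> (\<exists>i<q. u = v[i := \<not> v!i])"
proof
  assume "hamming v u = 1"
  then obtain i where S: "{i. i < length v \<and> v ! i \<noteq> u ! i} = {i}"
    unfolding hamming_def by (auto simp: card_Suc_eq)
  hence iq: "i < q" and ne: "v!i \<noteq> u!i" using assms by auto
  have "u = v[i := \<not> v!i]"
  proof (rule nth_equalityI)
    show "length u = length (v[i := \<not> v ! i])" using assms by simp
    fix j assume "j < length u"
    then show "u ! j = v[i := \<not> v ! i] ! j"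
      using S ne assms by (cases "j = i") auto
  qed
  thus "\<exists>i<q. u = v[i := \<not> v!i]" using iq by blast
next
  assume "\<exists>i<q. u = v[i := \<not> v!i]"
  then obtain i where "i < q" "u = v[i := \<not> v!i]" by blast
  then have "{i. i < length v \<and> v ! i \<noteq> u ! i} = {i}" using assms by (auto simp: nth_list_update)
  thus "hamming v u = 1" by (simp add: hamming_def)
qed

lemma ham_sym: "length u = length v \<Longrightarrow> hamming u v = hamming v u"
  unfolding hamming_def by metis

lemma deg:
  assumes "v \<in> hypercube_vertices q"
  shows "card {e \<in> hypercube_edges q. v \<in> e} = q"
proof -
  have lv: "length v = q" using assms by (simp add: hypercube_vertices_def)
  let ?f = "\<lambda>i. {v, v[i := \<not> v!i]}"
  have eq: "{e \<in> hypercube_edges q. v \<in> e} = ?f ` {..<q}"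
  proof (rule set_eqI, rule iffI)
    fix e assume "e \<in> {e \<in> hypercube_edges q. v \<in> e}"
    then obtain a b where e: "e = {a,b}" "length a = q" "length b = q" "hamming a b = 1" "v \<in> e"
      by (auto simp: hypercube_edges_def hypercube_vertices_def)
    show "e \<in> ?f ` {..<q}"
    proof (cases "v = a")
      case True
      then obtain i where "i<q" "b = v[i := \<not> v!i]" using ham1_iff e by metis
      then show ?thesis using e True by auto
    next
      case False
      then have "v = b" using e by auto
      then have "hamming v a = 1" using e ham_sym by metis
      then obtain i where "i<q" "a = v[i := \<not> v!i]" using ham1_iff e lv by metis
      then show ?thesis using e \<open>v = b\<close> by auto
    qed
  next
    fix e assume "e \<in> ?f ` {..<q}"
    then obtain i where i: "i < q" "e = ?f i" by auto
    have "hamming v (v[i := \<not> v!i]) = 1" using ham1_iff[of v q "v[i := \<not> v!i]"] lv i by auto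
    then show "e \<in> {e \<in> hypercube_edges q. v \<in> e}" using i lv
      unfolding hypercube_edges_def hypercube_vertices_def
      by (intro CollectI conjI exI[of _ v] exI[of _ "v[i := \<not> v!i]"]) auto
  qed
  have "inj_on ?f {..<q}"
  proof (rule inj_onI)
    fix i j assume "i \<in> {..<q}" "j \<in> {..<q}" "?f i = ?f j"
    then have "v[i := \<not> v!i] = v[j := \<not> v!j]" using lv
      by (metis doubleton_eq_iff)
    then have "v[i := \<not> v!i] ! i = v[j := \<not> v!j] ! i" by simp
    then show "i = j" using \<open>i \<in> {..<q}\<close> lv by (cases "i = j") auto
  qed
  then have "card (?f ` {..<q}) = q" by (simp add: card_image)
  then show ?thesis using eq by simp
qed

lemma edge_form:
  assumes "e \<in> hypercube_edges q"
  shows "\<exists>a b. e = {a,b} \<and> a \<noteq> b \<and> a \<in> hypercube_vertices q \<and> b \<in> hypercube_vertices q"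
proof -
  obtain a b where "e = {a,b}" "a \<in> hypercube_vertices q" "b \<in> hypercube_vertices q" "hamming a b = 1"
    using assms unfolding hypercube_edges_def by blast
  moreover have "a \<noteq> b" using \<open>hamming a b = 1\<close> by (auto simp: hamming_def)
  ultimately show ?thesis by blast
qed

lemma finE: "finite (hypercube_edges q)"
proof -
  have "hypercube_edges q \<subseteq> Pow (hypercube_vertices q)"
  proof
    fix e assume "e \<in> hypercube_edges q"
    then obtain a b where "e = {a,b}" "a \<in> hypercube_vertices q" "b \<in> hypercube_vertices q"
      using edge_form by blast
    then show "e \<in> Pow (hypercube_vertices q)" by simp
  qed
  thus ?thesis by (rule finite_subset) (simp add: finV)
qed

lemma card2: "e \<in> hypercube_edges q \<Longrightarrow> card e = 2"
proof -
  assume "e \<in> hypercube_edges q"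
  then obtain a b where "e = {a,b}" "a \<noteq> b" using edge_form by blast
  then show ?thesis by simp
qed

lemma handshake: "2 * card (hypercube_edges q) = q * 2^q"
proof -
  let ?V = "hypercube_vertices q" and ?E = "hypercube_edges q"
  have "q * 2^q = (\<Sum>v\<in>?V. card {e \<in> ?E. v \<in> e})"
    using deg cardV by simp
  also have "\<dots> = (\<Sum>v\<in>?V. \<Sum>e\<in>?E. if v \<in> e then 1 else 0)"
  proof (rule sum.cong)
    fix v show "card {e \<in> ?E. v \<in> e} = (\<Sum>e\<in>?E. if v \<in> e then 1 else 0)"
      by (subst card_eq_sum) (rule sum.inter_filter[OF finE])
  qed simp
  also have "\<dots> = (\<Sum>e\<in>?E. \<Sum>v\<in>?V. if v \<in> e then 1 else 0)"
    by (rule sum.swap)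
  also have "\<dots> = (\<Sum>e\<in>?E. card {v \<in> ?V. v \<in> e})"
  proof (rule sum.cong)
    fix e show "(\<Sum>v\<in>?V. if v \<in> e then 1 else 0) = card {v \<in> ?V. v \<in> e}"
      by (subst card_eq_sum) (rule sum.inter_filter[OF finV, symmetric])
  qed simp
  also have "\<dots> = (\<Sum>e\<in>?E. 2)"
  proof (rule sum.cong)
    fix e assume "e \<in> ?E"
    then obtain a b where "e = {a,b}" "a \<in> ?V" "b \<in> ?V" using edge_form by blast
    then have "{v \<in> ?V. v \<in> e} = e" by auto
    then show "card {v \<in> ?V. v \<in> e} = 2" using card2 \<open>e \<in> ?E\<close> by simp
  qed simp
  finally show ?thesis by simp
qed

lemma path_edges_img: "path_edges p m = (\<lambda>i. {p i, p (Suc i)}) ` {..<m}"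
  unfolding path_edges_def by auto

lemma injD':
  fixes p :: "nat \<Rightarrow> 'a"
  shows "inj_on p {0..m} \<Longrightarrow> a \<le> m \<Longrightarrow> b \<le> m \<Longrightarrow> p a = p b \<Longrightarrow> a = b"
proof -
  assume "inj_on p {0..m}" "a \<le> m" "b \<le> m" "p a = p b"
  moreover have "a \<in> {0..m}" "b \<in> {0..m}" using \<open>a \<le> m\<close> \<open>b \<le> m\<close> by simp_all
  ultimately show "a = b" using inj_onD by metis
qed

lemma card_path:
  assumes "inj_on p {0..m}"
  shows "card (path_edges p m) = m"
proof -
  have "inj_on (\<lambda>i. {p i, p (Suc i)}) {..<m}"
  proof (rule inj_onI)
    fix i j assume ij: "i \<in> {..<m}" "j \<in> {..<m}" "{p i, p (Suc i)} = {p j, p (Suc j)}"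
    then have "(p i = p j \<and> p (Suc i) = p (Suc j)) \<or> (p i = p (Suc j) \<and> p (Suc i) = p j)"
      by (metis doubleton_eq_iff)
    then show "i = j"
    proof
      assume "p i = p j \<and> p (Suc i) = p (Suc j)"
      then show ?thesis using injD'[OF assms, of i j] ij by simp
    next
      assume h: "p i = p (Suc j) \<and> p (Suc i) = p j"
      then have "i = Suc j" using injD'[OF assms, of i "Suc j"] ij by simp
      moreover have "Suc i = j" using h injD'[OF assms, of "Suc i" j] ij by simp
      ultimately show ?thesis by simp
    qed
  qed
  then show ?thesis by (simp add: path_edges_img card_image)
qed

lemma path_parity:
  assumes inj: "inj_on p {0..m}" and v0: "v \<noteq> p 0" and vm: "v \<noteq> p m"
  shows "even (card {e \<in> path_edges p m. v \<in> e})"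
proof (cases "v \<in> p ` {0..m}")
  case False
  have E: "{e \<in> path_edges p m. v \<in> e} = {}"
  proof (rule equals0I)
    fix e assume "e \<in> {e \<in> path_edges p m. v \<in> e}"
    then obtain i where "i < m" "e = {p i, p (Suc i)}" "v \<in> e" unfolding path_edges_def by blast
    then have "v = p i \<or> v = p (Suc i)" by blast
    moreover have "i \<in> {0..m}" "Suc i \<in> {0..m}" using \<open>i < m\<close> by auto
    ultimately show False using False by blast
  qed
  show ?thesis unfolding E by simp
next
  case True
  then obtain k where k: "k \<le> m" "v = p k" by auto
  have k0: "k \<noteq> 0"
  proof
    assume "k = 0" then show False using v0 k by simp
  qed
  have km: "k < m" using vm k by (cases "k = m") auto
  obtain j where j: "k = Suc j" using k0 not0_implies_Suc by blast
  have eq: "{e \<in> path_edges p m. v \<in> e} = {{p j, p k}, {p k, p (Suc k)}}"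
  proof (rule set_eqI, rule iffI)
    fix e assume "e \<in> {e \<in> path_edges p m. v \<in> e}"
    then obtain i where i: "i < m" "e = {p i, p (Suc i)}" "v \<in> e" unfolding path_edges_def by blast
    then have "p k = p i \<or> p k = p (Suc i)" using k by auto
    then have "k = i \<or> k = Suc i" using injD'[OF inj, of k i] injD'[OF inj, of k "Suc i"] k i by auto
    then show "e \<in> {{p j, p k}, {p k, p (Suc k)}}" using i j by auto
  next
    fix e assume e: "e \<in> {{p j, p k}, {p k, p (Suc k)}}"
    have "j < m" using j km by simp
    then have "{p j, p k} \<in> path_edges p m" "{p k, p (Suc k)} \<in> path_edges p m"
      using km j unfolding path_edges_def by blast+
    then show "e \<in> {e \<in> path_edges p m. v \<in> e}" using e k by blast
  qed
  have "p j \<noteq> p (Suc k)" using injD'[OF inj, of j "Suc k"] j km by auto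
  moreover have "p j \<noteq> p k" using injD'[OF inj, of j k] j km by auto
  ultimately have "{p j, p k} \<noteq> {p k, p (Suc k)}" by (metis doubleton_eq_iff)
  then show ?thesis using eq by simp
qed

theorem theorem4:
  fixes q m :: nat
  assumes "odd q" and "q > 0" and "m > 0"
    and "path_divides_hypercube m q"
  shows "m \<le> q \<and> m dvd q * 2 ^ (q - 1)"
proof -
  let ?V = "hypercube_vertices q" and ?E = "hypercube_edges q"
  obtain I and ps :: "nat \<Rightarrow> nat \<Rightarrow> bool list" where
    paths: "\<forall>j\<in>I. is_path_in ?V ?E (ps j) m" and
    disj: "\<forall>j\<in>I. \<forall>k\<in>I. j \<noteq> k \<longrightarrow> path_edges (ps j) m \<inter> path_edges (ps k) m = {}" and
    un: "(\<Union>j\<in>I. path_edges (ps j) m) = ?E"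
    using assms(4) unfolding path_divides_hypercube_def by blast
  define P where "P j = path_edges (ps j) m" for j
  have inj: "inj_on (ps j) {0..m}" if "j \<in> I" for j
    using paths that unfolding is_path_in_def by blast
  have cP: "card (P j) = m" if "j \<in> I" for j
    using card_path[OF inj[OF that]] by (simp add: P_def)
  have sub: "P j \<subseteq> ?E" if "j \<in> I" for j using un that P_def by blast
  have finP: "finite (P j)" if "j \<in> I" for j using sub[OF that] by (rule finite_subset) (rule finE)
  have neP: "P j \<noteq> {}" if "j \<in> I" for j using cP[OF that] assms(3) by (metis card.empty less_irrefl)
  have injP: "inj_on P I"
  proof (rule inj_onI)
    fix j k assume jk: "j \<in> I" "k \<in> I" "P j = P k"
    show "j = k"
    proof (rule ccontr)
      assume "j \<noteq> k"
      then have "P j \<inter> P k = {}" using disj jk P_def by blast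
      then show False using jk neP by simp
    qed
  qed
  have "P ` I \<subseteq> Pow ?E" using sub by blast
  then have "finite (P ` I)" by (rule finite_subset) (simp add: finE)
  then have finI: "finite I" using injP finite_imageD by blast
  have disjP: "\<forall>j\<in>I. \<forall>k\<in>I. j \<noteq> k \<longrightarrow> P j \<inter> P k = {}" using disj P_def by blast
  have "card ?E = card (\<Union>j\<in>I. P j)" using un P_def by simp
  also have "\<dots> = (\<Sum>j\<in>I. card (P j))"
    using card_UN_disjoint[OF finI] finP disjP by blast
  also have "\<dots> = card I * m" using cP by simp
  finally have cE: "card ?E = card I * m" .
  have q2: "q * 2 ^ q = 2 * (q * 2 ^ (q - 1))"
    using assms(2) by (cases q) auto
  have cE2: "card ?E = q * 2 ^ (q - 1)" using handshake[of q] q2 by simp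
  have dv: "m dvd q * 2 ^ (q - 1)" using cE cE2 by (metis dvd_triv_right)
  have endp: "\<exists>j\<in>I. v = ps j 0 \<or> v = ps j m" if v: "v \<in> ?V" for v
  proof (rule ccontr)
    assume nend: "\<not> (\<exists>j\<in>I. v = ps j 0 \<or> v = ps j m)"
    have "{e \<in> ?E. v \<in> e} = (\<Union>j\<in>I. {e \<in> P j. v \<in> e})" using un P_def by auto
    moreover have "card (\<Union>j\<in>I. {e \<in> P j. v \<in> e}) = (\<Sum>j\<in>I. card {e \<in> P j. v \<in> e})"
    proof (rule card_UN_disjoint[OF finI])
      show "\<forall>j\<in>I. finite {e \<in> P j. v \<in> e}" using finP by auto
      show "\<forall>i\<in>I. \<forall>j\<in>I. i \<noteq> j \<longrightarrow> {e \<in> P i. v \<in> e} \<inter> {e \<in> P j. v \<in> e} = {}"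
      proof (intro ballI impI)
        fix i j assume "i \<in> I" "j \<in> I" "i \<noteq> j"
        then have "P i \<inter> P j = {}" using disjP by simp
        then show "{e \<in> P i. v \<in> e} \<inter> {e \<in> P j. v \<in> e} = {}" by auto
      qed
    qed
    ultimately have "card {e \<in> ?E. v \<in> e} = (\<Sum>j\<in>I. card {e \<in> P j. v \<in> e})" by simp
    moreover have "even (\<Sum>j\<in>I. card {e \<in> P j. v \<in> e})"
    proof (rule dvd_sum)
      fix j assume "j \<in> I"
      have n0: "v \<noteq> ps j 0" and nm: "v \<noteq> ps j m" using nend \<open>j \<in> I\<close> by auto
      have "even (card {e \<in> path_edges (ps j) m. v \<in> e})"
        by (rule path_parity[OF inj[OF \<open>j \<in> I\<close>] n0 nm])
      then show "even (card {e \<in> P j. v \<in> e})" unfolding P_def .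
    qed
    ultimately have "even (card {e \<in> ?E. v \<in> e})" by (simp only:)
    then have "even q" using deg[OF v] by (simp only:)
    then show False using assms(1) by (simp only:)
  qed
  let ?g = "\<lambda>(j, b). if b then ps j 0 else ps j m"
  have "?V \<subseteq> ?g ` (I \<times> (UNIV :: bool set))"
  proof
    fix v assume "v \<in> ?V"
    then obtain j where j: "j \<in> I" "v = ps j 0 \<or> v = ps j m" using endp by blast
    show "v \<in> ?g ` (I \<times> UNIV)"
    using j(2) proof
      assume "v = ps j 0" then show ?thesis using j by (intro image_eqI[of _ _ "(j, True)"]) auto
    next
      assume "v = ps j m" then show ?thesis using j by (intro image_eqI[of _ _ "(j, False)"]) auto
    qed
  qed
  then have "card ?V \<le> card (?g ` (I \<times> (UNIV :: bool set)))"
    using finI by (intro card_mono) auto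
  also have "\<dots> \<le> card (I \<times> (UNIV :: bool set))" by (rule card_image_le) (use finI in auto)
  also have "\<dots> = 2 * card I" using finI by (simp add: card_cartesian_product)
  finally have "2 ^ q \<le> 2 * card I" using cardV by simp
  then have "2 ^ q * m \<le> 2 * card I * m" by (rule mult_le_mono1)
  also have "\<dots> = q * 2 ^ q" using cE handshake[of q] by (metis mult.assoc)
  finally have "m * 2 ^ q \<le> q * 2 ^ q" by (simp only: mult.commute)
  then have "m \<le> q" using mult_le_cancel2[of m "2^q" q] by simp
  with dv show ?thesis by simp
qed

end
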